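(* Let $R$ be an axis-parallel rectangle of height $h$, $\rho>0$, and $t=\lceil h/(\sqrt3\rho)\rceil$. For every vertical line $\lambda$ there is a set of $2t$ points such that for every axis-parallel line segment $\ell\subset R$ whose hippodrome $H(\ell,\rho)$ intersects $\lambda$, at least one of these points lies in $H(\ell,\rho)$.
   Context: The hippodrome $H(\ell,\rho)$ of a segment $\ell$ is the set of points of the plane at Euclidean distance at most $\rho$ from some point of $\ell$. *)

theory Defs
  imports "HOL-Analysis.Analysis"
begin

text \<open>Points of the plane are pairs of reals; the metric on real \<times> real is Euclidean.\<close>

definition hippodrome :: "(real \<times> real) set \<Rightarrow> real \<Rightarrow> (real \<times> real) set" where
  "hippodrome l \<rho> = {p. \<exists>q\<in>l. dist p q \<le> \<rho>}"

definition axis_parallel_segment :: "(real \<times> real) set \<Rightarrow> bool" where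
  "axis_parallel_segment l \<longleftrightarrow>
     (\<exists>p q. l = closed_segment p q \<and> (fst p = fst q \<or> snd p = snd q))"

definition vertical_line :: "real \<Rightarrow> (real \<times> real) set" where
  "vertical_line x0 = {p. fst p = x0}"

end

theory Submission
  imports Defs
begin

lemma cover_point:
  fixes r :: real and t :: nat
  assumes "0 \<le> r" "r \<le> real t" "t > 0"
  shows "\<exists>k<t. real k \<le> r \<and> r \<le> real k + 1"
proof (cases "r < real t")
  case True
  define k where "k = nat \<lfloor>r\<rfloor>"
  have "real k = of_int \<lfloor>r\<rfloor>" using assms(1) by (simp add: k_def)
  moreover have "k < t" using True assms(1) unfolding k_def
    by (metis floor_less_iff nat_less_iff of_int_of_nat_eq zero_le_floor)
  moreover have "of_int \<lfloor>r\<rfloor> \<le> r" "r \<le> of_int \<lfloor>r\<rfloor> + 1"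
    using floor_correct[of r] by linarith+
  ultimately show ?thesis by auto
next
  case False
  then have "r = real t" using assms by simp
  then show ?thesis using assms by (intro exI[of _ "t - 1"]) auto
qed

lemma sq_le_of_abs: "\<bar>x::real\<bar> \<le> a \<Longrightarrow> x^2 \<le> a^2"
  by (metis abs_ge_zero power2_abs power_mono)

theorem lemma4:
  fixes a b c d \<rho> x0 :: real
  assumes "a \<le> b" and "c < d" and "\<rho> > 0"
  defines "h \<equiv> d - c"
  defines "t \<equiv> nat \<lceil>h / (sqrt 3 * \<rho>)\<rceil>"
  shows "\<exists>P :: (real \<times> real) set. finite P \<and> card P = 2 * t \<and>
           (\<forall>l. axis_parallel_segment l \<and> l \<subseteq> {a..b} \<times> {c..d} \<and>
                hippodrome l \<rho> \<inter> vertical_line x0 \<noteq> {}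
                \<longrightarrow> P \<inter> hippodrome l \<rho> \<noteq> {})"
proof -
  have hpos: "h > 0" using assms(2) h_def by simp
  have s3: "sqrt 3 * \<rho> > 0" using assms(3) by simp
  have tge: "real t \<ge> h / (sqrt 3 * \<rho>)" unfolding t_def
    using le_of_int_ceiling[of "h / (sqrt 3 * \<rho>)"] by linarith
  have tpos: "t > 0" using tge hpos s3
    by (metis divide_pos_pos not_gr_zero not_less of_nat_0)
  define u where "u = h / real t"
  have upos: "u > 0" using hpos tpos u_def by simp
  have ule: "u \<le> sqrt 3 * \<rho>" unfolding u_def using tge tpos s3
    by (simp add: divide_le_eq mult.commute pos_divide_le_eq)
  define y where "y k = c + (real k + 1/2) * u" for k :: nat
  define A where "A = (\<lambda>k. (x0 - \<rho>/2, y k)) ` {..<t}"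
  define B where "B = (\<lambda>k. (x0 + \<rho>/2, y k)) ` {..<t}"
  have injy: "inj y" unfolding y_def inj_def using upos by auto
  have cA: "card A = t" unfolding A_def
    by (subst card_image) (auto simp: inj_on_def injD[OF injy])
  have cB: "card B = t" unfolding B_def
    by (subst card_image) (auto simp: inj_on_def injD[OF injy])
  have disj: "A \<inter> B = {}" unfolding A_def B_def using assms(3) by auto
  have fin: "finite A" "finite B" unfolding A_def B_def by auto
  have cov: "\<exists>p\<in>A \<union> B. dist p q \<le> \<rho>"
    if q1: "\<bar>fst q - x0\<bar> \<le> \<rho>" and q2: "c \<le> snd q" "snd q \<le> d" for q
  proof -
    define r where "r = (snd q - c) / u"
    have "0 \<le> r" using q2 upos r_def by simp
    moreover have "r \<le> real t" using q2 upos tpos unfolding r_def u_def h_def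
      by (simp add: divide_le_eq field_simps)
    ultimately obtain k where k: "k < t" "real k \<le> r" "r \<le> real k + 1"
      using cover_point tpos by blast
    have yk: "\<bar>snd q - y k\<bar> \<le> u/2"
    proof -
      have "real k * u \<le> snd q - c" "snd q - c \<le> (real k + 1) * u"
        using k upos unfolding r_def by (simp_all add: field_simps)
      moreover have "(real k + 1/2) * u = real k * u + u/2" "(real k + 1) * u = real k * u + u"
        by (simp_all add: algebra_simps)
      ultimately have "snd q - y k \<le> u/2" "y k - snd q \<le> u/2" unfolding y_def by linarith+
      then show ?thesis by (simp only: abs_le_iff) auto
    qed
    obtain p where p: "p \<in> A \<union> B" "fst p = x0 - \<rho>/2 \<or> fst p = x0 + \<rho>/2"
      "\<bar>fst q - fst p\<bar> \<le> \<rho>/2" "snd p = y k"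
    proof (cases "fst q \<le> x0")
      case True
      have "\<bar>fst q - (x0 - \<rho>/2)\<bar> \<le> \<rho>/2" using True q1 by (simp only: abs_le_iff) auto
      then show ?thesis using that[of "(x0 - \<rho>/2, y k)"] k unfolding A_def by auto
    next
      case False
      have "\<bar>fst q - (x0 + \<rho>/2)\<bar> \<le> \<rho>/2" using False q1 by (simp only: abs_le_iff) auto
      then show ?thesis using that[of "(x0 + \<rho>/2, y k)"] k unfolding B_def by auto
    qed
    have "(dist (fst p) (fst q))^2 \<le> (\<rho>/2)^2"
      using p(3) sq_le_of_abs by (simp add: dist_real_def abs_minus_commute)
    moreover have "(dist (snd p) (snd q))^2 \<le> (u/2)^2"
      using yk p(4) sq_le_of_abs by (simp add: dist_real_def abs_minus_commute)
    moreover have "(u/2)^2 \<le> 3 * \<rho>^2 / 4"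
    proof -
      have "u^2 \<le> (sqrt 3 * \<rho>)^2" using ule upos by (simp add: power_mono)
      then show ?thesis by (simp add: power_divide power_mult_distrib)
    qed
    ultimately have "(dist (fst p) (fst q))^2 + (dist (snd p) (snd q))^2 \<le> \<rho>^2"
      by (simp add: power_divide)
    hence "sqrt ((dist (fst p) (fst q))^2 + (dist (snd p) (snd q))^2) \<le> \<rho>"
      using assms(3) by (simp add: real_sqrt_le_iff real_le_lsqrt)
    hence "dist p q \<le> \<rho>" by (metis dist_Pair_Pair prod.collapse)
    then show ?thesis using p(1) by blast
  qed
  show ?thesis
  proof (intro exI[of _ "A \<union> B"] conjI allI impI)
    show "finite (A \<union> B)" using fin by simp
    show "card (A \<union> B) = 2 * t" using card_Un_disjoint[OF fin disj] cA cB by simp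
  next
    fix l assume H: "axis_parallel_segment l \<and> l \<subseteq> {a..b} \<times> {c..d} \<and>
                hippodrome l \<rho> \<inter> vertical_line x0 \<noteq> {}"
    then obtain z q where z: "fst z = x0" and q: "q \<in> l" and dz: "dist z q \<le> \<rho>"
      unfolding hippodrome_def vertical_line_def by blast
    have qR: "c \<le> snd q" "snd q \<le> d" using H q by auto
    have "\<bar>fst q - x0\<bar> \<le> \<rho>"
      using dz z by (metis dist_commute dist_real_def fst_conv dist_fst_le order_trans
          prod.collapse)
    then obtain p where "p \<in> A \<union> B" "dist p q \<le> \<rho>" using cov qR by blast
    then show "(A \<union> B) \<inter> hippodrome l \<rho> \<noteq> {}"
      unfolding hippodrome_def using q by blast
  qed
qed

end
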